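(* Let $\mathbf A\in\mathbb R^{2\times2}_{\rm sym}$ be positive definite with eigenvalues $a_1,a_2$, let $\delta:=\frac12\sqrt{\operatorname{tr}^2\log\mathbf A-4\det\log\mathbf A}=\frac12|\log a_1-\log a_2|$, and let $\theta(x):=\frac2{\sinh(2x)}-\frac1x$ for $x\ne0$, with $\frac{\theta(\delta)}{\delta}$ understood as $\lim_{x\to0}\frac{\theta(x)}x=-\frac23$ when $\delta=0$. Then for all $\mathbf X\in\mathbb R^{2\times2}$, writing $\mathbf L=\log\mathbf A$ and $\mathbf Z:=\mathbf L^2\mathbf X-2\mathbf L\mathbf X\mathbf L+\mathbf X\mathbf L^2$, $\lim_{s\to0}\frac{\log(\mathbf A+s\mathbf X)-\log\mathbf A}{s}=\frac12(\mathbf A^{-1}\mathbf X+\mathbf X\mathbf A^{-1})+\frac{\theta(\delta)}{8\delta}\big(\mathbf A^{-1}\mathbf Z+\mathbf Z\mathbf A^{-1}\big),$ where $\frac{d\log\mathbf A}{d\mathbf A}\mathbf X$ on the left is the Fréchet derivative of the matrix logarithm (extended linearly to nonsymmetric directions via the Daleckiĭ–Kreĭn formula).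
   Context: $\log\mathbf A$ denotes the spectrally defined matrix logarithm of a symmetric positive definite matrix. For non-symmetric $\mathbf X$, the left-hand side is to be understood as $\frac{d\log\mathbf A}{d\mathbf A}\mathbf X:=\mathbf Q\big([F(a_i,a_j)]\odot(\mathbf Q^{\mathsf T}\mathbf X\mathbf Q)\big)\mathbf Q^{\mathsf T}$ where $\mathbf A=\mathbf Q\operatorname{diag}(a_1,a_2)\mathbf Q^{\mathsf T}$, $\odot$ is the entrywise product, $F(x,y)=\frac{\log x-\log y}{x-y}$ for $x\ne y$ and $F(x,x)=1/x$. *)

theory Defs
  imports "HOL-Analysis.Analysis"
begin

type_synonym mat2 = "real^2^2"

definition mdiag :: "(2 \<Rightarrow> real) \<Rightarrow> mat2" where
  "mdiag a = (\<chi> i j. if i = j then a i else 0)"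

definition spd :: "mat2 \<Rightarrow> bool" where
  "spd A \<longleftrightarrow> transpose A = A \<and> (\<forall>x::real^2. x \<noteq> 0 \<longrightarrow> x \<bullet> (A *v x) > 0)"

definition spec_decomp :: "mat2 \<Rightarrow> mat2 \<Rightarrow> (2 \<Rightarrow> real) \<Rightarrow> bool" where
  "spec_decomp A Q a \<longleftrightarrow> orthogonal_matrix Q \<and> A = Q ** mdiag a ** transpose Q"

definition mlog :: "mat2 \<Rightarrow> mat2" where
  "mlog A = (SOME L. \<exists>Q a. spec_decomp A Q a \<and> L = Q ** mdiag (\<lambda>i. ln (a i)) ** transpose Q)"

definition Flog :: "real \<Rightarrow> real \<Rightarrow> real" where
  "Flog x y = (if x = y then 1 / x else (ln x - ln y) / (x - y))"

definition DK_log :: "mat2 \<Rightarrow> (2 \<Rightarrow> real) \<Rightarrow> mat2 \<Rightarrow> mat2" where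
  "DK_log Q a X = Q ** (\<chi> i j. Flog (a i) (a j) * (transpose Q ** X ** Q) $ i $ j) ** transpose Q"

definition theta :: "real \<Rightarrow> real" where
  "theta x = 2 / sinh (2 * x) - 1 / x"

definition theta_over :: "real \<Rightarrow> real" where
  "theta_over d = (if d = 0 then - 2 / 3 else theta d / d)"

definition log_delta :: "mat2 \<Rightarrow> real" where
  "log_delta A = sqrt ((trace (mlog A))^2 - 4 * det (mlog A)) / 2"

definition dlog_rhs :: "mat2 \<Rightarrow> mat2 \<Rightarrow> mat2" where
  "dlog_rhs A X =
    (let L = mlog A; Ai = matrix_inv A; Z = L ** L ** X - 2 *\<^sub>R (L ** X ** L) + X ** L ** L
     in (1/2) *\<^sub>R (Ai ** X + X ** Ai) + (theta_over (log_delta A) / 8) *\<^sub>R (Ai ** Z + Z ** Ai))"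

end

theory Submission
  imports Defs
begin

definition mk2 :: "real \<Rightarrow> real \<Rightarrow> real \<Rightarrow> real \<Rightarrow> mat2" where
  "mk2 a b c d = (\<chi> i j. if i = 1 then (if j = 1 then a else b) else (if j = 1 then c else d))"

lemma two_ne_one [simp]: "(2::2) \<noteq> 1" "(1::2) \<noteq> 2" by auto

lemma mk2_nth [simp]: "mk2 a b c d $ 1 $ 1 = a" "mk2 a b c d $ 1 $ 2 = b"
  "mk2 a b c d $ 2 $ 1 = c" "mk2 a b c d $ 2 $ 2 = d"
  by (simp_all add: mk2_def)

lemma mat2_eq: "(M::mat2) = mk2 (M$1$1) (M$1$2) (M$2$1) (M$2$2)"
  by (simp add: mk2_def vec_eq_iff forall_2)

lemma mk2_eq_iff: "mk2 a b c d = mk2 a' b' c' d' \<longleftrightarrow> a = a' \<and> b = b' \<and> c = c' \<and> d = d'"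
  by (metis mk2_nth)

lemma mk2_mult: "mk2 a b c d ** mk2 e f g h = mk2 (a*e+b*g) (a*f+b*h) (c*e+d*g) (c*f+d*h)"
  by (simp add: mk2_def matrix_matrix_mult_def vec_eq_iff forall_2 sum_2)

lemma mk2_transpose: "transpose (mk2 a b c d) = mk2 a c b d"
  by (simp add: mk2_def transpose_def vec_eq_iff forall_2)

lemma mk2_add: "mk2 a b c d + mk2 e f g h = mk2 (a+e) (b+f) (c+g) (d+h)"
  by (simp add: mk2_def vec_eq_iff forall_2)
lemma mk2_diff: "mk2 a b c d - mk2 e f g h = mk2 (a-e) (b-f) (c-g) (d-h)"
  by (simp add: mk2_def vec_eq_iff forall_2)
lemma mk2_scaleR: "r *\<^sub>R mk2 a b c d = mk2 (r*a) (r*b) (r*c) (r*d)"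
  by (simp add: mk2_def vec_eq_iff forall_2)
lemma mk2_mat: "(mat x :: mat2) = mk2 x 0 0 x"
  by (simp add: mk2_def mat_def vec_eq_iff forall_2)
lemma mk2_mdiag: "mdiag a = mk2 (a 1) 0 0 (a 2)"
  by (simp add: mk2_def mdiag_def vec_eq_iff forall_2)
lemma mk2_det: "det (mk2 a b c d) = a*d - b*c"
  by (simp add: det_2)
lemma mk2_trace: "trace (mk2 a b c d) = a + d"
  by (simp add: trace_def sum_2)
lemma mk2_zero: "(0::mat2) = mk2 0 0 0 0"
  by (simp add: mk2_def vec_eq_iff forall_2)

lemmas mk2_simps = mk2_mult mk2_transpose mk2_add mk2_diff mk2_scaleR mk2_mat mk2_mdiag mk2_det mk2_trace mk2_eq_iff

lemma orth_mk2: "orthogonal_matrix (mk2 p q r s) \<longleftrightarrow>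
   p*p+r*r = 1 \<and> p*q+r * s = 0 \<and> q*q+s * s = 1 \<and> p*p+q*q = 1 \<and> p*r+q * s = 0 \<and> r*r+s * s = 1"
  by (auto simp: orthogonal_matrix_def mk2_simps algebra_simps)

lemma spec_exists:
  assumes "transpose M = M"
  shows "\<exists>Q a. spec_decomp M Q a"
proof -
  define p where "p = M$1$1"
  define q where "q = M$1$2"
  define r where "r = M$2$2"
  have "transpose M $ 2 $ 1 = M $ 1 $ 2" by (simp add: transpose_def)
  then have q2: "M$2$1 = q" using assms unfolding q_def by simp
  have "M = mk2 (M$1$1) (M$1$2) (M$2$1) (M$2$2)" by (rule mat2_eq)
  also have "\<dots> = mk2 p q q r" using q2 by (simp add: p_def q_def r_def)
  finally have M: "M = mk2 p q q r" .
  show ?thesis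
  proof (cases "q = 0")
    case True
    have "spec_decomp M (mat 1) (\<lambda>i. if i = 1 then p else r)"
      unfolding spec_decomp_def M using True by (simp add: mk2_simps orth_mk2)
    then show ?thesis by blast
  next
    case False
    define S where "S = sqrt (((p-r)/2)^2 + q^2)"
    have S2: "S^2 = ((p-r)/2)^2 + q^2" unfolding S_def by simp
    define l where "l = (p+r)/2 + S"
    define u where "u = l - p"
    have "u*(u+p-r) = S^2 - ((p-r)/2)^2" unfolding u_def l_def by (simp add: power2_eq_square field_simps)
    with S2 have rel: "u*(u+p-r) = q^2" by simp
    have e1: "q^2*(p+u) + u^2*(r-u) = p*(q^2+u^2)" unfolding rel[symmetric] by (simp add: algebra_simps power2_eq_square power3_eq_cube)
    have e2: "q*u*((p+u)-(r-u)) = q*(q^2+u^2)" unfolding rel[symmetric] by (simp add: algebra_simps power2_eq_square power3_eq_cube)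
    have e3: "u^2*(p+u) + q^2*(r-u) = r*(q^2+u^2)" unfolding rel[symmetric] by (simp add: algebra_simps power2_eq_square power3_eq_cube)
    define n where "n = sqrt (q^2+u^2)"
    have npos: "n > 0" unfolding n_def using False by (simp add: add_pos_nonneg)
    have n2: "n*n = q^2+u^2" unfolding n_def by (simp add: add_nonneg_nonneg flip: power2_eq_square)
    define Q where "Q = mk2 (q/n) (-u/n) (u/n) (q/n)"
    have nz: "q*q+u*u \<noteq> 0" using False by (simp add: add_nonneg_eq_0_iff)
    have orth: "orthogonal_matrix Q" unfolding Q_def orth_mk2 using npos n2 nz
      by (simp add: field_simps power2_eq_square add_divide_distrib[symmetric])
    have lm: "l = p + u" "p + r - l = r - u" unfolding u_def by simp_all
    have "Q ** mdiag (\<lambda>i. if i = 1 then l else p+r-l) ** transpose Q =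
       mk2 ((q^2*(p+u) + u^2*(r-u))/(n*n)) (q*u*((p+u)-(r-u))/(n*n)) (q*u*((p+u)-(r-u))/(n*n)) ((u^2*(p+u) + q^2*(r-u))/(n*n))"
      unfolding Q_def lm using npos by (simp add: mk2_simps power2_eq_square field_simps)
    also have "\<dots> = M" unfolding e1 e2 e3 n2[symmetric] M using npos by simp
    finally show ?thesis using orth unfolding spec_decomp_def by metis
  qed
qed

lemma mul_mdiag_nth: "((C::mat2) ** mdiag b) $ i $ j = C $ i $ j * b j"
  using exhaust_2[of j] by (auto simp: matrix_matrix_mult_def mdiag_def sum_2)
lemma mdiag_mul_nth: "(mdiag b ** (C::mat2)) $ i $ j = b i * C $ i $ j"
  using exhaust_2[of i] by (auto simp: matrix_matrix_mult_def mdiag_def sum_2)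

lemma orthD: assumes "orthogonal_matrix Q" shows "transpose Q ** Q = mat 1" "Q ** transpose Q = mat 1"
  using assms unfolding orthogonal_matrix_def by auto

lemma spec_fun_unique:
  assumes "spec_decomp M P b" "spec_decomp M R c"
  shows "P ** mdiag (\<lambda>i. f (b i)) ** transpose P = R ** mdiag (\<lambda>i. f (c i)) ** transpose R"
proof -
  have oP: "transpose P ** P = mat 1" "P ** transpose P = mat 1" and oR: "transpose R ** R = mat 1" "R ** transpose R = mat 1"
    using assms unfolding spec_decomp_def orthogonal_matrix_def by auto
  have MP: "M = P ** mdiag b ** transpose P" and MR: "M = R ** mdiag c ** transpose R"
    using assms unfolding spec_decomp_def by auto
  have hP: "\<And>X::mat2. X ** transpose P ** P = X" "\<And>X::mat2. X ** P ** transpose P = X"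
    by (metis matrix_mul_assoc oP matrix_mul_rid)+
  have hR: "\<And>X::mat2. X ** transpose R ** R = X" "\<And>X::mat2. X ** R ** transpose R = X"
    by (metis matrix_mul_assoc oR matrix_mul_rid)+
  define C where "C = transpose R ** P"
  have "transpose R ** M ** P = C ** mdiag b"
    unfolding MP C_def by (simp add: matrix_mul_assoc hP)
  moreover have "transpose R ** M ** P = mdiag c ** C"
    unfolding MR C_def by (metis matrix_mul_assoc matrix_mul_lid oR(1) matrix_mul_rid)
  ultimately have eq: "C ** mdiag b = mdiag c ** C" by simp
  have "C ** mdiag (\<lambda>i. f (b i)) = mdiag (\<lambda>i. f (c i)) ** C"
  proof -
    { fix i j
      have "C$i$j * b j = c i * C$i$j" using arg_cong[OF eq, of "\<lambda>X. X$i$j"] by (simp add: mul_mdiag_nth mdiag_mul_nth)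
      then have "C$i$j * f (b j) = f (c i) * C$i$j"
        by (cases "C$i$j = 0") auto }
    then show ?thesis by (simp add: vec_eq_iff mul_mdiag_nth mdiag_mul_nth)
  qed
  then have "R ** (C ** mdiag (\<lambda>i. f (b i))) ** transpose P = R ** (mdiag (\<lambda>i. f (c i)) ** C) ** transpose P"
    by simp
  then show ?thesis unfolding C_def
    by (simp add: matrix_mul_assoc hP hR oR)
qed

lemma mlog_eq:
  assumes "spec_decomp M P b"
  shows "mlog M = P ** mdiag (\<lambda>i. ln (b i)) ** transpose P"
proof -
  have "\<exists>L. \<exists>Q a. spec_decomp M Q a \<and> L = Q ** mdiag (\<lambda>i. ln (a i)) ** transpose Q"
    using assms by blast
  from someI_ex[OF this] obtain Q a where "spec_decomp M Q a" "mlog M = Q ** mdiag (\<lambda>i. ln (a i)) ** transpose Q"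
    unfolding mlog_def by blast
  then show ?thesis using spec_fun_unique[OF assms, of _ _ ln] by metis
qed

lemma sinh_ln_diff: assumes "a1 > (0::real)" "a2 > 0"
  shows "sinh (ln a1 - ln a2) = (a1/a2 - a2/a1)/2"
proof -
  have e1: "exp (ln a1 - ln a2) = a1/a2" using assms by (simp add: exp_diff)
  have e2: "exp (-(ln a1 - ln a2)) = a2/a1" using assms by (simp add: exp_diff)
  show ?thesis unfolding sinh_def e1 e2 by simp
qed

lemma key_scalar:
  assumes a1: "a1 > (0::real)" and a2: "a2 > 0"
  shows "(1/2)*(1/a1+1/a2) + theta_over (\<bar>ln a1 - ln a2\<bar>/2)/8 * ((1/a1+1/a2)*(ln a1 - ln a2)^2) = Flog a1 a2"
proof (cases "a1 = a2")
  case True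
  then show ?thesis by (simp add: Flog_def)
next
  case False
  define x where "x = ln a1 - ln a2"
  have xnz: "x \<noteq> 0" unfolding x_def using False a1 a2 by simp
  define d where "d = \<bar>x\<bar>/2"
  have dnz: "d \<noteq> 0" unfolding d_def using xnz by simp
  have x2: "x^2 = 4*d^2" unfolding d_def by (simp add: power2_eq_square)
  have sd: "sinh (2*d) \<noteq> 0" using dnz by simp
  have t: "theta_over (\<bar>ln a1 - ln a2\<bar>/2)/8 * x^2 = (2*d/sinh(2*d) - 1)/2"
    unfolding theta_over_def theta_def x_def[symmetric] d_def[symmetric] x2 using dnz sd
    by (simp add: field_simps power2_eq_square)
  have u: "d/sinh(2*d) = x/(2* sinh x)"
  proof (cases "x > 0")
    case True then show ?thesis unfolding d_def by simp
  next
    case False then have "\<bar>x\<bar> = -x" by simp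
    then show ?thesis unfolding d_def by simp
  qed
  have sx: "sinh x = (a1/a2 - a2/a1)/2" unfolding x_def using sinh_ln_diff[OF a1 a2] .
  have "(1/2)*(1/a1+1/a2) + theta_over (\<bar>ln a1 - ln a2\<bar>/2)/8 * ((1/a1+1/a2)*(ln a1 - ln a2)^2)
     = (1/a1+1/a2) * (1/2 + theta_over (\<bar>ln a1 - ln a2\<bar>/2)/8 * x^2)"
    unfolding x_def by (simp add: algebra_simps)
  also have "\<dots> = (1/a1+1/a2) * (d/sinh(2*d))" unfolding t using sd by (simp add: field_simps)
  also have "\<dots> = (1/a1+1/a2) * x / (2* sinh x)" unfolding u by simp
  also have "\<dots> = x / (a1 - a2)"
  proof -
    have h1: "1/a1+1/a2 = (a1+a2)/(a1*a2)" using a1 a2 by (simp add: field_simps)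
    have h2: "a1/a2 - a2/a1 = (a1-a2)*(a1+a2)/(a1*a2)" using a1 a2 by (simp add: field_simps power2_eq_square)
    have nz: "a1 - a2 \<noteq> 0" "a1 + a2 \<noteq> 0" "a1*a2 \<noteq> 0" using a1 a2 False by auto
    have gen: "\<And>u v w. u \<noteq> 0 \<Longrightarrow> v \<noteq> 0 \<Longrightarrow> w \<noteq> 0 \<Longrightarrow> (u/v)*x/(2*((w*u/v)/2)) = x/(w::real)"
      by (simp add: field_simps)
    show ?thesis unfolding sx h1 h2 using gen[OF nz(2) nz(3) nz(1)] by simp

  qed
  finally show ?thesis unfolding Flog_def x_def using False by simp
qed

lemma mm_add_l: "(A::mat2) ** (B + C) = A ** B + A ** C"
  by (simp add: vec_eq_iff matrix_matrix_mult_def sum_2 algebra_simps)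
lemma mm_add_r: "((B::mat2) + C) ** A = B ** A + C ** A"
  by (simp add: vec_eq_iff matrix_matrix_mult_def sum_2 algebra_simps)
lemma mm_diff_l: "(A::mat2) ** (B - C) = A ** B - A ** C"
  by (simp add: vec_eq_iff matrix_matrix_mult_def sum_2 algebra_simps)
lemma mm_diff_r: "((B::mat2) - C) ** A = B ** A - C ** A"
  by (simp add: vec_eq_iff matrix_matrix_mult_def sum_2 algebra_simps)
lemma mm_scale_l: "(r *\<^sub>R (B::mat2)) ** A = r *\<^sub>R (B ** A)"
  by (simp add: vec_eq_iff matrix_matrix_mult_def sum_2 algebra_simps)
lemma mm_scale_r: "(A::mat2) ** (r *\<^sub>R B) = r *\<^sub>R (A ** B)"
  by (simp add: vec_eq_iff matrix_matrix_mult_def sum_2 algebra_simps)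

lemma cj_add: "(Q::mat2) ** M ** transpose Q + Q ** N ** transpose Q = Q ** (M + N) ** transpose Q"
  by (simp add: mm_add_l mm_add_r)
lemma cj_diff: "(Q::mat2) ** M ** transpose Q - Q ** N ** transpose Q = Q ** (M - N) ** transpose Q"
  by (simp add: mm_diff_l mm_diff_r)
lemma cj_scale: "r *\<^sub>R ((Q::mat2) ** M ** transpose Q) = Q ** (r *\<^sub>R M) ** transpose Q"
  by (simp add: mm_scale_l mm_scale_r)
lemma cj_mult: assumes "orthogonal_matrix (Q::mat2)"
  shows "(Q ** M ** transpose Q) ** (Q ** N ** transpose Q) = Q ** (M ** N) ** transpose Q"
proof -
  have "transpose Q ** Q = mat 1" using assms orthD by blast
  then show ?thesis by (metis matrix_mul_assoc matrix_mul_rid)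
qed

lemma mdiag_mult: "mdiag a ** mdiag b = mdiag (\<lambda>i. a i * b i)"
  by (simp add: mk2_simps)

lemma inv_unique:
  assumes "(A::mat2) ** B = mat 1" "B ** A = mat 1"
  shows "matrix_inv A = B"
proof -
  have "\<exists>B'. A ** B' = mat 1 \<and> B' ** A = mat 1" using assms by blast
  from someI_ex[OF this] have h: "A ** matrix_inv A = mat 1" "matrix_inv A ** A = mat 1"
    unfolding matrix_inv_def by auto
  have "matrix_inv A = matrix_inv A ** (A ** B)" using assms by simp
  also have "\<dots> = B" by (simp add: matrix_mul_assoc h)
  finally show ?thesis .
qed

lemma mdiag_axis: "mdiag a *v axis i 1 = a i *\<^sub>R axis i (1::real)"
  using exhaust_2[of i]
  by (auto simp: vec_eq_iff matrix_vector_mult_def mdiag_def axis_def sum_2 forall_2)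

lemma spd_pos:
  assumes "spd A" "spec_decomp A Q a"
  shows "a i > 0"
proof -
  have oQ: "transpose Q ** Q = mat 1" "Q ** transpose Q = mat 1"
    using assms(2) unfolding spec_decomp_def orthogonal_matrix_def by auto
  have AQ: "A = Q ** mdiag a ** transpose Q" using assms(2) unfolding spec_decomp_def by auto
  define x where "x = Q *v axis i (1::real)"
  have tx: "transpose Q *v x = axis i 1" unfolding x_def by (simp add: matrix_vector_mul_assoc oQ del: transpose_matrix_vector)
  have ax: "axis i (1::real) \<noteq> 0" by (metis axis_nth zero_index zero_neq_one)
  have xnz: "x \<noteq> 0" using tx ax by (metis matrix_vector_mult_0_right)
  have "A *v x = Q *v (mdiag a *v (transpose Q *v x))"
    unfolding AQ by (simp add: matrix_vector_mul_assoc matrix_mul_assoc del: transpose_matrix_vector)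
  also have "\<dots> = Q *v (a i *\<^sub>R axis i 1)" by (simp only: tx mdiag_axis)
  also have "\<dots> = a i *\<^sub>R x" unfolding x_def
    by (simp add: matrix_vector_mult_scaleR)
  finally have "x \<bullet> (A *v x) = a i * (x \<bullet> x)" by simp
  moreover have "x \<bullet> (A *v x) > 0" using assms(1) xnz unfolding spd_def by blast
  moreover have "x \<bullet> x > 0" using xnz by simp
  ultimately show ?thesis by (metis zero_less_mult_pos2)
qed

lemma mdiag_one: "mdiag (\<lambda>i. 1) = mat 1" by (simp add: mk2_simps)

lemma spd_facts:
  assumes "spd A" "spec_decomp A Q a"
  shows "mlog A = Q ** mdiag (\<lambda>i. ln (a i)) ** transpose Q"
    and "matrix_inv A = Q ** mdiag (\<lambda>i. 1 / a i) ** transpose Q"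
    and "log_delta A = \<bar>ln (a 1) - ln (a 2)\<bar> / 2"
proof -
  have oQ: "orthogonal_matrix Q" using assms(2) unfolding spec_decomp_def by auto
  have AQ: "A = Q ** mdiag a ** transpose Q" using assms(2) unfolding spec_decomp_def by auto
  have pos: "\<And>i. a i > 0" using spd_pos[OF assms] .
  show ml: "mlog A = Q ** mdiag (\<lambda>i. ln (a i)) ** transpose Q" using mlog_eq[OF assms(2)] .
  have "A ** (Q ** mdiag (\<lambda>i. 1 / a i) ** transpose Q) = mat 1"
    unfolding AQ cj_mult[OF oQ] mdiag_mult using pos orthD[OF oQ]
    by (simp add: less_imp_neq[symmetric] mdiag_one)
  moreover have "(Q ** mdiag (\<lambda>i. 1 / a i) ** transpose Q) ** A = mat 1"
    unfolding AQ cj_mult[OF oQ] mdiag_mult using pos orthD[OF oQ]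
    by (simp add: less_imp_neq[symmetric] mdiag_one)
  ultimately show "matrix_inv A = Q ** mdiag (\<lambda>i. 1 / a i) ** transpose Q" by (rule inv_unique)
  define D where "D = mdiag (\<lambda>i. ln (a i))"
  have tr: "trace (mlog A) = ln (a 1) + ln (a 2)"
  proof -
    have "trace (mlog A) = trace ((Q ** D) ** transpose Q)" unfolding ml D_def ..
    also have "\<dots> = trace (transpose Q ** (Q ** D))" by (rule trace_mul_sym)
    also have "\<dots> = trace D" by (simp add: matrix_mul_assoc orthD[OF oQ])
    finally show ?thesis unfolding D_def by (simp add: mk2_simps)
  qed
  have dt: "det (mlog A) = ln (a 1) * ln (a 2)"
  proof -
    have "det Q * det Q = 1" using orthD[OF oQ] by (metis det_I det_mul det_transpose)
    then have "det (mlog A) = det D" unfolding ml D_def by (simp add: det_mul)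
    then show ?thesis unfolding D_def by (simp add: mk2_simps)
  qed
  have "(ln (a 1) + ln (a 2))^2 - 4 * (ln (a 1) * ln (a 2)) = (ln (a 1) - ln (a 2))^2"
    by (simp add: power2_eq_square algebra_simps)
  then show "log_delta A = \<bar>ln (a 1) - ln (a 2)\<bar> / 2"
    unfolding log_delta_def tr dt by simp
qed

lemma part2:
  assumes "spd A" "spec_decomp A Q a"
  shows "DK_log Q a X = dlog_rhs A X"
proof -
  have oQ: "orthogonal_matrix Q" using assms(2) unfolding spec_decomp_def by auto
  have pos: "\<And>i. a i > 0" using spd_pos[OF assms] .
  define Y where "Y = transpose Q ** X ** Q"
  have XY: "X = Q ** Y ** transpose Q" unfolding Y_def
    by (simp add: matrix_mul_assoc orthD[OF oQ]) (simp add: matrix_mul_assoc[symmetric] orthD[OF oQ])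
  define DL where "DL = mdiag (\<lambda>i. ln (a i))"
  define Di where "Di = mdiag (\<lambda>i. 1 / a i)"
  define c where "c = theta_over (\<bar>ln (a 1) - ln (a 2)\<bar> / 2) / 8"
  define Z where "Z = DL ** DL ** Y - 2 *\<^sub>R (DL ** Y ** DL) + Y ** DL ** DL"
  have rhs: "dlog_rhs A X = Q ** ((1/2) *\<^sub>R (Di ** Y + Y ** Di) + c *\<^sub>R (Di ** Z + Z ** Di)) ** transpose Q"
    unfolding dlog_rhs_def Let_def spd_facts[OF assms] c_def[symmetric] DL_def[symmetric] Di_def[symmetric]
    unfolding XY Z_def
    by (simp only: cj_mult[OF oQ] cj_add cj_diff cj_scale)
  have lhs: "DK_log Q a X = Q ** (\<chi> i j. Flog (a i) (a j) * Y $ i $ j) ** transpose Q"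
    unfolding DK_log_def Y_def ..
  have K: "(1/2)*(1/a 1+1/a 2) + c * ((1/a 1+1/a 2)*(ln (a 1) - ln (a 2))^2) = Flog (a 1) (a 2)"
    unfolding c_def using key_scalar[OF pos pos] by simp
  have K': "(1/2)*(1/a 2+1/a 1) + c * ((1/a 2+1/a 1)*(ln (a 2) - ln (a 1))^2) = Flog (a 2) (a 1)"
    unfolding c_def using key_scalar[OF pos pos, of 2 1] by (simp add: abs_minus_commute)
  have F: "\<And>i. Flog (a i) (a i) = 1 / a i" by (simp add: Flog_def)
  obtain y11 y12 y21 y22 where Yeq: "Y = mk2 y11 y12 y21 y22" using mat2_eq by blast
  have "(\<chi> i j. Flog (a i) (a j) * Y $ i $ j) = mk2 (Flog (a 1) (a 1) * Y$1$1) (Flog (a 1) (a 2) * Y$1$2)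
      (Flog (a 2) (a 1) * Y$2$1) (Flog (a 2) (a 2) * Y$2$2)"
    by (simp add: mk2_def vec_eq_iff forall_2)
  also have "\<dots> = (1/2) *\<^sub>R (Di ** Y + Y ** Di) + c *\<^sub>R (Di ** Z + Z ** Di)"
    unfolding Z_def Di_def DL_def F K[symmetric] K'[symmetric] Yeq
    apply (simp add: mk2_simps)
    by (simp add: power2_eq_square algebra_simps diff_divide_distrib add_divide_distrib)
  finally show ?thesis unfolding lhs rhs by simp
qed

lemma mlog_conj:
  assumes oQ: "orthogonal_matrix Q" and sym: "transpose M = M"
  shows "mlog (Q ** M ** transpose Q) = Q ** mlog M ** transpose Q"
proof -
  obtain P b where Pb: "spec_decomp M P b" using spec_exists[OF sym] by blast
  have "spec_decomp (Q ** M ** transpose Q) (Q ** P) b"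
    using Pb oQ unfolding spec_decomp_def
    by (auto simp: orthogonal_matrix_mul matrix_transpose_mul matrix_mul_assoc)
  then have "mlog (Q ** M ** transpose Q) = (Q ** P) ** mdiag (\<lambda>i. ln (b i)) ** transpose (Q ** P)"
    by (rule mlog_eq)
  also have "\<dots> = Q ** (P ** mdiag (\<lambda>i. ln (b i)) ** transpose P) ** transpose Q"
    by (simp add: matrix_transpose_mul matrix_mul_assoc)
  finally show ?thesis using mlog_eq[OF Pb] by simp
qed

lemma tendsto_mk2:
  assumes "(f1 \<longlongrightarrow> c1) F" "(f2 \<longlongrightarrow> c2) F" "(f3 \<longlongrightarrow> c3) F" "(f4 \<longlongrightarrow> c4) F"
  shows "((\<lambda>s. mk2 (f1 s) (f2 s) (f3 s) (f4 s)) \<longlongrightarrow> mk2 c1 c2 c3 c4) F"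
proof (rule vec_tendstoI)
  fix i :: 2
  show "((\<lambda>s. mk2 (f1 s) (f2 s) (f3 s) (f4 s) $ i) \<longlongrightarrow> mk2 c1 c2 c3 c4 $ i) F"
  proof (rule vec_tendstoI)
    fix j :: 2
    show "((\<lambda>s. mk2 (f1 s) (f2 s) (f3 s) (f4 s) $ i $ j) \<longlongrightarrow> mk2 c1 c2 c3 c4 $ i $ j) F"
      using exhaust_2[of i] exhaust_2[of j] assms by auto
  qed
qed

lemma tendsto_cj:
  fixes Q R :: mat2
  assumes "(f \<longlongrightarrow> L) F"
  shows "((\<lambda>s. Q ** (f s :: mat2) ** R) \<longlongrightarrow> Q ** L ** R) F"
proof -
  have e: "\<And>i j. ((\<lambda>s. f s $ i $ j) \<longlongrightarrow> L $ i $ j) F"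
    by (intro tendsto_vec_nth assms)
  show ?thesis
  proof (intro vec_tendstoI)
    fix i j
    show "((\<lambda>s. (Q ** f s ** R) $ i $ j) \<longlongrightarrow> (Q ** L ** R) $ i $ j) F"
      unfolding matrix_matrix_mult_def vec_lambda_beta
      by (intro tendsto_sum tendsto_mult tendsto_const e)
  qed
qed

lemma deriv_quot:
  assumes "(f has_real_derivative d) (at 0)"
  shows "((\<lambda>s. (f s - f 0) / s) \<longlongrightarrow> d) (at 0)"
  using assms unfolding has_field_derivative_iff by simp

lemma spec_tr_det:
  assumes "spec_decomp M P b"
  shows "trace M = b 1 + b 2" "det M = b 1 * b 2"
proof -
  have oQ: "orthogonal_matrix P" and MP: "M = P ** mdiag b ** transpose P"
    using assms unfolding spec_decomp_def by auto
  have "trace M = trace ((P ** mdiag b) ** transpose P)" unfolding MP ..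
  also have "\<dots> = trace (transpose P ** (P ** mdiag b))" by (rule trace_mul_sym)
  also have "\<dots> = trace (mdiag b)" by (simp add: matrix_mul_assoc orthD[OF oQ])
  finally show "trace M = b 1 + b 2" by (simp add: mk2_simps)
  have "det P * det P = 1" using orthD[OF oQ] by (metis det_I det_mul det_transpose)
  then have "det M = det (mdiag b)" unfolding MP by (simp add: det_mul)
  then show "det M = b 1 * b 2" by (simp add: mk2_simps)
qed

lemma nondeg_formula:
  assumes sum: "l1 + l2 = p + r" and prod: "l1 * l2 = p * r - q * q" and ne: "l1 \<noteq> l2"
  defines "\<beta> \<equiv> (ln l1 - ln l2) / (l1 - l2)"
  shows "mlog (mk2 p q q r) = mk2 (ln l1 + \<beta> * (p - l1)) (\<beta> * q) (\<beta> * q) (ln l2 + \<beta> * (r - l2))"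
proof -
  define M where "M = mk2 p q q r"
  have sym: "transpose M = M" unfolding M_def by (simp add: mk2_simps)
  obtain P b where Pb: "spec_decomp M P b" using spec_exists[OF sym] by blast
  have oP: "orthogonal_matrix P" and MP: "M = P ** mdiag b ** transpose P"
    using Pb unfolding spec_decomp_def by auto
  have tb: "b 1 + b 2 = p + r" "b 1 * b 2 = p * r - q * q"
    using spec_tr_det[OF Pb] unfolding M_def by (simp_all add: mk2_simps)
  define \<alpha> where "\<alpha> = ln l1 - \<beta> * l1"
  have a2: "\<alpha> = ln l2 - \<beta> * l2" unfolding \<alpha>_def \<beta>_def using ne
    by (simp add: field_simps)
  have root: "b i = l1 \<or> b i = l2" for i
  proof -
    have "(b i - l1) * (b i - l2) = 0"
    proof -
      have "(b i - l1) * (b i - l2) = b i * b i - (l1 + l2) * b i + l1 * l2" by (simp add: algebra_simps)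
      also have "\<dots> = b i * b i - (b 1 + b 2) * b i + b 1 * b 2" using sum prod tb by simp
      also have "\<dots> = 0" using exhaust_2[of i] by (auto simp: algebra_simps)
      finally show ?thesis .
    qed
    then show ?thesis by simp
  qed
  have lnb: "ln (b i) = \<alpha> + \<beta> * b i" for i
    using root[of i] \<alpha>_def a2 by auto
  have "mlog M = P ** mdiag (\<lambda>i. \<alpha> + \<beta> * b i) ** transpose P"
    using mlog_eq[OF Pb] lnb by simp
  also have "mdiag (\<lambda>i. \<alpha> + \<beta> * b i) = \<alpha> *\<^sub>R mat 1 + \<beta> *\<^sub>R mdiag b" by (simp add: mk2_simps)
  also have "P ** (\<alpha> *\<^sub>R mat 1 + \<beta> *\<^sub>R mdiag b) ** transpose P = \<alpha> *\<^sub>R (P ** transpose P) + \<beta> *\<^sub>R M"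
    unfolding MP by (simp add: mm_add_l mm_add_r mm_scale_l mm_scale_r)
  also have "\<dots> = \<alpha> *\<^sub>R mat 1 + \<beta> *\<^sub>R M" using orthD[OF oP] by simp
  finally have "mlog M = mk2 (\<alpha> + \<beta>*p) (\<beta>*q) (\<beta>*q) (\<alpha> + \<beta>*r)" unfolding M_def by (simp add: mk2_simps)
  moreover have "\<alpha> + \<beta>*p = ln l1 + \<beta>*(p-l1)" by (simp add: \<alpha>_def algebra_simps)
  moreover have "\<alpha> + \<beta>*r = ln l2 + \<beta>*(r-l2)" using a2 by (simp add: algebra_simps)
  ultimately show ?thesis unfolding M_def by simp
qed

lemma E_derivs:
  fixes l1 l2 :: "real \<Rightarrow> real"
  assumes d1: "(l1 has_real_derivative y11) (at 0)" and d2: "(l2 has_real_derivative y22) (at 0)"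
    and z1: "l1 0 = a1" and z2: "l2 0 = a2" and p1: "a1 > 0" and p2: "a2 > 0" and ne: "a1 \<noteq> a2"
  defines "\<beta> \<equiv> \<lambda>s. (ln (l1 s) - ln (l2 s)) / (l1 s - l2 s)"
  shows "((\<lambda>s. ln (l1 s) + \<beta> s * (a1 + s*y11 - l1 s)) has_real_derivative y11/a1) (at 0)"
    and "((\<lambda>s. \<beta> s * (s*y12)) has_real_derivative Flog a1 a2 * y12) (at 0)"
    and "((\<lambda>s. ln (l2 s) + \<beta> s * (a2 + s*y22 - l2 s)) has_real_derivative y22/a2) (at 0)"
proof -
  have ne0: "l1 0 - l2 0 \<noteq> 0" using z1 z2 ne by simp
  have "(\<beta> has_real_derivative (((y11 / l1 0 - y22 / l2 0) * (l1 0 - l2 0) - (ln (l1 0) - ln (l2 0)) * (y11 - y22)) / ((l1 0 - l2 0) * (l1 0 - l2 0)))) (at 0)"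
    unfolding \<beta>_def using d1 d2 z1 z2 p1 p2 ne0
    by (auto intro!: derivative_eq_intros simp: power2_eq_square)
  then obtain db where db: "(\<beta> has_real_derivative db) (at 0)" by blast
  have b0: "\<beta> 0 = Flog a1 a2" unfolding \<beta>_def Flog_def using z1 z2 ne by simp
  show "((\<lambda>s. ln (l1 s) + \<beta> s * (a1 + s*y11 - l1 s)) has_real_derivative y11/a1) (at 0)"
    using d1 db z1 p1
    by (auto intro!: derivative_eq_intros)
  show "((\<lambda>s. \<beta> s * (s*y12)) has_real_derivative Flog a1 a2 * y12) (at 0)"
    using db b0
    by (auto intro!: derivative_eq_intros)
  show "((\<lambda>s. ln (l2 s) + \<beta> s * (a2 + s*y22 - l2 s)) has_real_derivative y22/a2) (at 0)"
    using d2 db z2 p2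
    by (auto intro!: derivative_eq_intros)
qed

lemma Flog_sym: "Flog x y = Flog y x"
  unfolding Flog_def by (metis minus_diff_eq minus_divide_divide)

lemma l_derivs:
  fixes a1 a2 y11 y12 y22 :: real
  assumes ne: "a1 \<noteq> a2"
  defines "\<sigma> \<equiv> sgn (a1 - a2)"
  defines "Dd \<equiv> \<lambda>s. ((a1 - a2 + s*(y11-y22))/2)^2 + (s*y12)^2"
  shows "((\<lambda>s. (a1 + a2 + s*(y11+y22))/2 + \<sigma> * sqrt (Dd s)) has_real_derivative y11) (at 0)"
    and "((\<lambda>s. (a1 + a2 + s*(y11+y22))/2 - \<sigma> * sqrt (Dd s)) has_real_derivative y22) (at 0)"
proof -
  have D0: "Dd 0 > 0" unfolding Dd_def using ne by simp
  have "(Dd has_real_derivative ((a1-a2)*(y11-y22)/2)) (at 0)"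
    unfolding Dd_def by (auto intro!: derivative_eq_intros simp: field_simps)
  then have dS: "((\<lambda>s. sqrt (Dd s)) has_real_derivative ((a1-a2)*(y11-y22)/2) / (2 * sqrt (Dd 0))) (at 0)"
    using D0 apply (auto intro!: derivative_eq_intros)
    by (simp add: field_simps)
  have sD0: "sqrt (Dd 0) = \<bar>a1 - a2\<bar>/2" unfolding Dd_def by (simp add: real_sqrt_abs)
  have key: "\<sigma> * (((a1-a2)*(y11-y22)/2) / (2 * sqrt (Dd 0))) = (y11-y22)/2"
    unfolding sD0 \<sigma>_def using ne by (cases "a1 > a2") (auto simp: field_simps)
  have dT: "((\<lambda>s. (a1 + a2 + s*(y11+y22))/2) has_real_derivative (y11+y22)/2) (at 0)"
    by (auto intro!: derivative_eq_intros)
  have "((\<lambda>s. (a1 + a2 + s*(y11+y22))/2 + \<sigma> * sqrt (Dd s)) has_real_derivative (y11+y22)/2 + (y11-y22)/2) (at 0)"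
    using DERIV_add[OF dT DERIV_cmult[OF dS, of \<sigma>]] unfolding key .
  moreover have "(y11+y22)/2 + (y11-y22)/2 = y11" by (simp add: field_simps)
  ultimately show "((\<lambda>s. (a1 + a2 + s*(y11+y22))/2 + \<sigma> * sqrt (Dd s)) has_real_derivative y11) (at 0)" by simp
  have "((\<lambda>s. (a1 + a2 + s*(y11+y22))/2 - \<sigma> * sqrt (Dd s)) has_real_derivative (y11+y22)/2 - (y11-y22)/2) (at 0)"
    using DERIV_diff[OF dT DERIV_cmult[OF dS, of \<sigma>]] unfolding key .
  moreover have "(y11+y22)/2 - (y11-y22)/2 = y22" by (simp add: field_simps)
  ultimately show "((\<lambda>s. (a1 + a2 + s*(y11+y22))/2 - \<sigma> * sqrt (Dd s)) has_real_derivative y22) (at 0)" by simp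
qed

lemma diag_limit_nd:
  fixes a :: "2 \<Rightarrow> real" and Y :: mat2
  assumes p1: "a 1 > 0" and p2: "a 2 > 0" and ne: "a 1 \<noteq> a 2" and sym: "transpose Y = Y"
  shows "((\<lambda>s. (1/s) *\<^sub>R (mlog (mdiag a + s *\<^sub>R Y) - mlog (mdiag a))) \<longlongrightarrow> (\<chi> i j. Flog (a i) (a j) * Y$i$j)) (at 0)"
proof -
  define a1 where "a1 = a 1"
  define a2 where "a2 = a 2"
  define y11 where "y11 = Y$1$1"
  define y12 where "y12 = Y$1$2"
  define y22 where "y22 = Y$2$2"
  have "transpose Y $ 2 $ 1 = Y $ 1 $ 2" by (simp add: transpose_def)
  then have y21: "Y$2$1 = y12" using sym unfolding y12_def by simp
  have Bs: "mdiag a + s *\<^sub>R Y = mk2 (a1 + s*y11) (s*y12) (s*y12) (a2 + s*y22)" for s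
  proof -
    have "Y = mk2 (Y$1$1) (Y$1$2) (Y$2$1) (Y$2$2)" by (rule mat2_eq)
    also have "\<dots> = mk2 y11 y12 y12 y22" using y21 by (simp add: y11_def y12_def y22_def)
    finally show ?thesis by (simp add: mk2_simps a1_def a2_def)
  qed
  have ne': "a1 \<noteq> a2" using ne by (simp add: a1_def a2_def)
  define \<sigma> where "\<sigma> = sgn (a1 - a2)"
  define Dd where "Dd = (\<lambda>s. ((a1 - a2 + s*(y11-y22))/2)^2 + (s*y12)^2)"
  define l1 where "l1 = (\<lambda>s. (a1 + a2 + s*(y11+y22))/2 + \<sigma> * sqrt (Dd s))"
  define l2 where "l2 = (\<lambda>s. (a1 + a2 + s*(y11+y22))/2 - \<sigma> * sqrt (Dd s))"
  define \<beta> where "\<beta> = (\<lambda>s. (ln (l1 s) - ln (l2 s)) / (l1 s - l2 s))"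
  define E11 where "E11 = (\<lambda>s. ln (l1 s) + \<beta> s * (a1 + s*y11 - l1 s))"
  define E12 where "E12 = (\<lambda>s. \<beta> s * (s*y12))"
  define E22 where "E22 = (\<lambda>s. ln (l2 s) + \<beta> s * (a2 + s*y22 - l2 s))"
  have d1: "(l1 has_real_derivative y11) (at 0)" unfolding l1_def \<sigma>_def Dd_def by (rule l_derivs[OF ne'])
  have d2: "(l2 has_real_derivative y22) (at 0)" unfolding l2_def \<sigma>_def Dd_def by (rule l_derivs[OF ne'])
  have sD0: "sqrt (Dd 0) = \<bar>a1 - a2\<bar>/2" unfolding Dd_def by (simp add: real_sqrt_abs)
  have sig: "\<sigma> * \<bar>a1 - a2\<bar> = a1 - a2" unfolding \<sigma>_def using ne' by (cases "a1 > a2") auto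
  have z1: "l1 0 = a1" unfolding l1_def sD0 using sig by (simp add: field_simps)
  have z2: "l2 0 = a2" unfolding l2_def sD0 using sig by (simp add: field_simps)
  have p1': "a1 > 0" and p2': "a2 > 0" using p1 p2 by (simp_all add: a1_def a2_def)
  note ED = E_derivs[OF d1 d2 z1 z2 p1' p2' ne']
  have dE11: "(E11 has_real_derivative y11/a1) (at 0)" unfolding E11_def \<beta>_def using ED(1) by simp
  have dE12: "(E12 has_real_derivative Flog a1 a2 * y12) (at 0)" unfolding E12_def \<beta>_def using ED(2) by simp
  have dE22: "(E22 has_real_derivative y22/a2) (at 0)" unfolding E22_def \<beta>_def using ED(3) by simp
  have formula: "mlog (mdiag a + s *\<^sub>R Y) = mk2 (E11 s) (E12 s) (E12 s) (E22 s)" if Ds: "Dd s > 0" for s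
  proof -
    have sq: "sqrt (Dd s) ^ 2 = Dd s" using Ds by simp
    have sgsq: "\<sigma> * \<sigma> = 1" unfolding \<sigma>_def using ne' by (cases "a1 > a2") auto
    have sum: "l1 s + l2 s = (a1 + s*y11) + (a2 + s*y22)" unfolding l1_def l2_def by (simp add: field_simps)
    have "l1 s * l2 s = ((a1 + a2 + s*(y11+y22))/2)^2 - (\<sigma> * \<sigma>) * (sqrt (Dd s))^2"
      unfolding l1_def l2_def by (simp add: power2_eq_square algebra_simps)
    also have "\<dots> = (a1 + s*y11) * (a2 + s*y22) - (s*y12) * (s*y12)"
      unfolding sgsq sq by (simp add: Dd_def power2_eq_square field_simps)
    finally have prod: "l1 s * l2 s = (a1 + s*y11) * (a2 + s*y22) - (s*y12) * (s*y12)" .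
    have nel: "l1 s \<noteq> l2 s"
    proof
      assume "l1 s = l2 s"
      then have "\<sigma> * sqrt (Dd s) = 0" unfolding l1_def l2_def by simp
      then show False using Ds sgsq by auto
    qed
    show ?thesis unfolding Bs nondeg_formula[OF sum prod nel]
      by (simp add: E11_def E12_def E22_def \<beta>_def)
  qed
  have D0: "Dd 0 > 0" unfolding Dd_def using ne' by simp
  have "(Dd \<longlongrightarrow> Dd 0) (at 0)" unfolding Dd_def by (intro tendsto_intros) auto
  then have evD: "eventually (\<lambda>s. Dd s > 0) (at 0)" using D0 by (rule order_tendstoD(1))
  have m0: "mlog (mdiag a) = mk2 (E11 0) (E12 0) (E12 0) (E22 0)"
    using formula[OF D0] by simp
  have ev: "eventually (\<lambda>s. mk2 ((E11 s - E11 0)/s) ((E12 s - E12 0)/s) ((E12 s - E12 0)/s) ((E22 s - E22 0)/s)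
      = (1/s) *\<^sub>R (mlog (mdiag a + s *\<^sub>R Y) - mlog (mdiag a))) (at 0)"
    using evD by eventually_elim (simp add: formula m0 mk2_diff mk2_scaleR mk2_eq_iff)
  have lim: "((\<lambda>s. mk2 ((E11 s - E11 0)/s) ((E12 s - E12 0)/s) ((E12 s - E12 0)/s) ((E22 s - E22 0)/s))
      \<longlongrightarrow> mk2 (y11/a1) (Flog a1 a2 * y12) (Flog a1 a2 * y12) (y22/a2)) (at 0)"
    by (intro tendsto_mk2 deriv_quot dE11 dE12 dE22)
  have tgt: "mk2 (y11/a1) (Flog a1 a2 * y12) (Flog a1 a2 * y12) (y22/a2) = (\<chi> i j. Flog (a i) (a j) * Y$i$j)"
    by (simp add: mk2_def vec_eq_iff forall_2 a1_def a2_def y11_def y12_def y22_def y21 Flog_def[of "a 1" "a 1"] Flog_def[of "a 2" "a 2"] Flog_sym[of "a 2" "a 1"])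
  show ?thesis using Lim_transform_eventually[OF lim ev] unfolding tgt .
qed

lemma diag_limit_deg:
  fixes a :: "2 \<Rightarrow> real" and Y :: mat2
  assumes p1: "a 1 > 0" and eq: "a 1 = a 2" and sym: "transpose Y = Y"
  shows "((\<lambda>s. (1/s) *\<^sub>R (mlog (mdiag a + s *\<^sub>R Y) - mlog (mdiag a))) \<longlongrightarrow> (\<chi> i j. Flog (a i) (a j) * Y$i$j)) (at 0)"
proof -
  define c0 where "c0 = a 1"
  have c0p: "c0 > 0" using p1 by (simp add: c0_def)
  have ma: "mdiag a = c0 *\<^sub>R mat 1" using eq by (simp add: mk2_simps c0_def)
  obtain P \<mu> where Pm: "spec_decomp Y P \<mu>" using spec_exists[OF sym] by blast
  have oP: "orthogonal_matrix P" and YP: "Y = P ** mdiag \<mu> ** transpose P"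
    using Pm unfolding spec_decomp_def by auto
  have Bs: "mdiag a + s *\<^sub>R Y = P ** mdiag (\<lambda>i. c0 + s * \<mu> i) ** transpose P" for s
  proof -
    have "mdiag (\<lambda>i. c0 + s * \<mu> i) = c0 *\<^sub>R mat 1 + s *\<^sub>R mdiag \<mu>" by (simp add: mk2_simps)
    then have "P ** mdiag (\<lambda>i. c0 + s * \<mu> i) ** transpose P = c0 *\<^sub>R (P ** transpose P) + s *\<^sub>R Y"
      unfolding YP by (simp add: mm_add_l mm_add_r mm_scale_l mm_scale_r)
    then show ?thesis using orthD[OF oP] ma by simp
  qed
  have ml: "mlog (mdiag a + s *\<^sub>R Y) = P ** mdiag (\<lambda>i. ln (c0 + s * \<mu> i)) ** transpose P" for s
    using mlog_eq[of _ P "\<lambda>i. c0 + s * \<mu> i"] oP Bs[of s] unfolding spec_decomp_def by auto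
  have ml0: "mlog (mdiag a) = P ** mdiag (\<lambda>i. ln (c0 + 0 * \<mu> i)) ** transpose P"
    using ml[of 0] by simp
  have q: "(1/s) *\<^sub>R (mlog (mdiag a + s *\<^sub>R Y) - mlog (mdiag a))
     = P ** mdiag (\<lambda>i. (ln (c0 + s * \<mu> i) - ln (c0 + 0 * \<mu> i)) / s) ** transpose P" for s
  proof -
    have "mdiag (\<lambda>i. (ln (c0 + s * \<mu> i) - ln (c0 + 0 * \<mu> i)) / s)
       = (1/s) *\<^sub>R (mdiag (\<lambda>i. ln (c0 + s * \<mu> i)) - mdiag (\<lambda>i. ln (c0 + 0 * \<mu> i)))"
      by (simp add: mk2_simps)
    then show ?thesis unfolding ml ml0 by (simp add: cj_diff cj_scale)
  qed
  have dln: "((\<lambda>s. ln (c0 + s * \<mu> i)) has_real_derivative \<mu> i / c0) (at 0)" for i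
    using c0p by (auto intro!: derivative_eq_intros)
  have qlim: "((\<lambda>s. (ln (c0 + s * \<mu> i) - ln (c0 + 0 * \<mu> i)) / s) \<longlongrightarrow> \<mu> i / c0) (at 0)" for i
    using deriv_quot[OF dln[of i]] by simp
  have "((\<lambda>s. mdiag (\<lambda>i. (ln (c0 + s * \<mu> i) - ln (c0 + 0 * \<mu> i)) / s)) \<longlongrightarrow> mdiag (\<lambda>i. \<mu> i / c0)) (at 0)"
    unfolding mk2_mdiag by (intro tendsto_mk2 tendsto_const qlim)
  then have lim: "((\<lambda>s. (1/s) *\<^sub>R (mlog (mdiag a + s *\<^sub>R Y) - mlog (mdiag a))) \<longlongrightarrow> P ** mdiag (\<lambda>i. \<mu> i / c0) ** transpose P) (at 0)"
    unfolding q by (rule tendsto_cj)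
  have "P ** mdiag (\<lambda>i. \<mu> i / c0) ** transpose P = (1/c0) *\<^sub>R Y"
  proof -
    have "mdiag (\<lambda>i. \<mu> i / c0) = (1/c0) *\<^sub>R mdiag \<mu>" by (simp add: mk2_simps)
    then show ?thesis unfolding YP by (simp add: cj_scale)
  qed
  also have "\<dots> = (\<chi> i j. Flog (a i) (a j) * Y$i$j)"
  proof -
    have "a i = c0" for i using eq exhaust_2[of i] by (auto simp: c0_def)
    then show ?thesis by (simp add: vec_eq_iff Flog_def)
  qed
  finally show ?thesis using lim by simp
qed

lemma transpose_add2: "transpose ((A::mat2) + B) = transpose A + transpose B"
  by (simp add: transpose_def vec_eq_iff)

theorem mainTheorem9:
  fixes A :: mat2
  assumes "spd A"
  shows "(\<forall>X::mat2. transpose X = X \<longrightarrow>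
            ((\<lambda>s. (1 / s) *\<^sub>R (mlog (A + s *\<^sub>R X) - mlog A)) \<longlongrightarrow> dlog_rhs A X) (at 0))
       \<and> (\<forall>X::mat2. \<forall>Q a. spec_decomp A Q a \<longrightarrow> DK_log Q a X = dlog_rhs A X)"
proof (intro conjI allI impI)
  fix X :: mat2 and Q a
  assume "spec_decomp A Q a"
  then show "DK_log Q a X = dlog_rhs A X" using part2[OF assms] by blast
next
  fix X :: mat2
  assume symX: "transpose X = X"
  have symA: "transpose A = A" using assms unfolding spd_def by blast
  obtain Q a where Qa: "spec_decomp A Q a" using spec_exists[OF symA] by blast
  have oQ: "orthogonal_matrix Q" and AQ: "A = Q ** mdiag a ** transpose Q"
    using Qa unfolding spec_decomp_def by auto
  have pos: "\<And>i. a i > 0" using spd_pos[OF assms Qa] .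
  define Y where "Y = transpose Q ** X ** Q"
  have XY: "X = Q ** Y ** transpose Q" unfolding Y_def
    by (simp add: matrix_mul_assoc orthD[OF oQ]) (simp add: matrix_mul_assoc[symmetric] orthD[OF oQ])
  have symY: "transpose Y = Y" unfolding Y_def using symX
    by (simp add: matrix_transpose_mul matrix_mul_assoc)
  have symB: "transpose (mdiag a + s *\<^sub>R Y) = mdiag a + s *\<^sub>R Y" for s
    by (simp add: transpose_add2 transpose_scalar symY mk2_simps)
  have AB: "A + s *\<^sub>R X = Q ** (mdiag a + s *\<^sub>R Y) ** transpose Q" for s
    unfolding AQ XY by (simp add: cj_add cj_scale)
  have ml: "mlog (A + s *\<^sub>R X) = Q ** mlog (mdiag a + s *\<^sub>R Y) ** transpose Q" for s
    unfolding AB by (rule mlog_conj[OF oQ symB])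
  have mlA: "mlog A = Q ** mlog (mdiag a) ** transpose Q"
    using ml[of 0] by simp
  have q: "(1 / s) *\<^sub>R (mlog (A + s *\<^sub>R X) - mlog A)
      = Q ** ((1/s) *\<^sub>R (mlog (mdiag a + s *\<^sub>R Y) - mlog (mdiag a))) ** transpose Q" for s
    unfolding ml mlA by (simp add: cj_diff cj_scale)
  have limB: "((\<lambda>s. (1/s) *\<^sub>R (mlog (mdiag a + s *\<^sub>R Y) - mlog (mdiag a))) \<longlongrightarrow> (\<chi> i j. Flog (a i) (a j) * Y$i$j)) (at 0)"
  proof (cases "a 1 = a 2")
    case True
    then show ?thesis using diag_limit_deg[OF pos True symY] by simp
  next
    case False
    then show ?thesis using diag_limit_nd[OF pos pos False symY] by simp
  qed
  have "((\<lambda>s. (1 / s) *\<^sub>R (mlog (A + s *\<^sub>R X) - mlog A)) \<longlongrightarrow> Q ** (\<chi> i j. Flog (a i) (a j) * Y$i$j) ** transpose Q) (at 0)"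
    unfolding q by (rule tendsto_cj[OF limB])
  moreover have "Q ** (\<chi> i j. Flog (a i) (a j) * Y$i$j) ** transpose Q = dlog_rhs A X"
    using part2[OF assms Qa, of X] unfolding DK_log_def Y_def by simp
  ultimately show "((\<lambda>s. (1 / s) *\<^sub>R (mlog (A + s *\<^sub>R X) - mlog A)) \<longlongrightarrow> dlog_rhs A X) (at 0)" by simp
qed

end
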